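(* For every graph $H$ (with at least one edge), there exists a constant $c(H) > 0$ such that $p_c(n,H) \geqslant c(H)\, n^{-1/\lambda^*(H)}$ for every $n \in \mathbb{N}$.
   Context: $\lambda^*(H) := \min_{e \in E(H)} \max_{F \subset H - e} \frac{e(F)}{v(F)}$, the maximum being over (nonempty) subgraphs $F$ of $H - e$. The $H$-bootstrap process on $K_n$ starting from $G \subset E(K_n)$: $G_0 = G$, $G_{t+1} = G_t \cup \{e \in E(K_n) : \exists\, H' \cong H,\ e \in H' \subset G_t \cup \{e\}\}$; $\langle G\rangle_H = \bigcup_t G_t$. $G_{n,p}$ is the Erdős–Rényi random graph. $p_c(n,H) = \inf\{p : \mathbb{P}(\langle G_{n,p}\rangle_H = K_n) \geqslant 1/2\}$. *)

theory Defs
  imports Complex_Main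
begin

definition is_graph :: "'a set \<Rightarrow> 'a set set \<Rightarrow> bool" where
  "is_graph V E \<longleftrightarrow> finite V \<and> (\<forall>d\<in>E. d \<subseteq> V \<and> card d = 2)"

definition max_density :: "'a set \<Rightarrow> 'a set set \<Rightarrow> real" where
  "max_density V E =
     Max {real (card D) / real (card W) | W D. W \<subseteq> V \<and> W \<noteq> {} \<and> D \<subseteq> E \<and> (\<forall>d\<in>D. d \<subseteq> W)}"

definition lambda_star :: "'a set \<Rightarrow> 'a set set \<Rightarrow> real" where
  "lambda_star V E = Min ((\<lambda>e. max_density V (E - {e})) ` E)"

definition Kn_edges :: "nat \<Rightarrow> nat set set" where
  "Kn_edges n = {{u, v} | u v. u < n \<and> v < n \<and> u \<noteq> v}"

text \<open>One step of the H-bootstrap process on K_n: add every edge e of K_n lying in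
  a copy H' of H (image of H under an injective vertex map into [n]) with
  E(H') contained in G plus e.\<close>

definition bstep :: "nat \<Rightarrow> 'a set \<Rightarrow> 'a set set \<Rightarrow> nat set set \<Rightarrow> nat set set" where
  "bstep n V E G = G \<union> {e \<in> Kn_edges n. \<exists>f. inj_on f V \<and> f ` V \<subseteq> {0..<n} \<and>
        e \<in> (\<lambda>d. f ` d) ` E \<and> (\<lambda>d. f ` d) ` E \<subseteq> G \<union> {e}}"

definition bclosure :: "nat \<Rightarrow> 'a set \<Rightarrow> 'a set set \<Rightarrow> nat set set \<Rightarrow> nat set set" where
  "bclosure n V E G = (\<Union>t. (bstep n V E ^^ t) G)"

text \<open>Probability that G(n,p) satisfies the property P (each edge of K_n present
  independently with probability p).\<close>

definition gnp_prob :: "nat \<Rightarrow> real \<Rightarrow> (nat set set \<Rightarrow> bool) \<Rightarrow> real" where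
  "gnp_prob n p P = (\<Sum>G\<in>Pow (Kn_edges n).
      if P G then p ^ card G * (1 - p) ^ (card (Kn_edges n) - card G) else 0)"

definition p_c :: "nat \<Rightarrow> 'a set \<Rightarrow> 'a set set \<Rightarrow> real" where
  "p_c n V E = Inf {p. 0 \<le> p \<and> p \<le> 1 \<and>
       gnp_prob n p (\<lambda>G. bclosure n V E G = Kn_edges n) \<ge> 1/2}"

end

theory Submission
  imports Defs "HOL-Library.FuncSet"
begin

lemma total_one:
  fixes p :: real
  assumes "finite A"
  shows "(\<Sum>G\<in>Pow A. p ^ card G * (1 - p) ^ (card A - card G)) = 1"
  using assms
proof (induction A rule: finite_induct)
  case empty then show ?case by simp
next
  case (insert a A)
  let ?t = "\<lambda>B G. p ^ card G * (1 - p) ^ (card B - card G)"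
  have fin: "finite (Pow A)" using insert by simp
  have disj: "Pow A \<inter> insert a ` Pow A = {}" using insert by auto
  have inj: "inj_on (insert a) (Pow A)" using insert
    by (smt (verit, best) PowD inj_onI insert_ident subset_eq)
  have s1: "(\<Sum>G\<in>Pow A. ?t (insert a A) G) = (1 - p) * (\<Sum>G\<in>Pow A. ?t A G)"
    unfolding sum_distrib_left
  proof (rule sum.cong[OF refl])
    fix G assume "G \<in> Pow A"
    then have "card G \<le> card A" using insert card_mono by auto
    then have "card (insert a A) - card G = Suc (card A - card G)" using insert by simp
    then show "?t (insert a A) G = (1 - p) * ?t A G" by simp
  qed
  have s2: "(\<Sum>G\<in>insert a ` Pow A. ?t (insert a A) G) = p * (\<Sum>G\<in>Pow A. ?t A G)"
    unfolding sum.reindex[OF inj] sum_distrib_left o_def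
  proof (rule sum.cong[OF refl])
    fix G assume G: "G \<in> Pow A"
    then have "finite G" "a \<notin> G" using insert finite_subset by auto
    then have "card (insert a G) = Suc (card G)" by simp
    then show "?t (insert a A) (insert a G) = p * ?t A G" using insert by simp
  qed
  have "Pow (insert a A) = Pow A \<union> insert a ` Pow A" by (rule Pow_insert)
  then have "(\<Sum>G\<in>Pow (insert a A). ?t (insert a A) G)
      = (\<Sum>G\<in>Pow A. ?t (insert a A) G) + (\<Sum>G\<in>insert a ` Pow A. ?t (insert a A) G)"
    using sum.union_disjoint[OF fin finite_imageI[OF fin] disj] by simp
  also have "\<dots> = 1" using s1 s2 insert.IH by (simp add: algebra_simps)
  finally show ?case .
qed

lemma md_nonneg:
  assumes "is_graph V E"
  shows "finite {real (card D) / real (card W) | W D. W \<subseteq> V \<and> W \<noteq> {} \<and> D \<subseteq> E \<and> (\<forall>d\<in>D. d \<subseteq> W)}"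
proof -
  have fV: "finite V" using assms unfolding is_graph_def by simp
  have "E \<subseteq> Pow V" using assms unfolding is_graph_def by auto
  then have fE: "finite E" using fV finite_subset by blast
  have "{real (card D) / real (card W) | W D. W \<subseteq> V \<and> W \<noteq> {} \<and> D \<subseteq> E \<and> (\<forall>d\<in>D. d \<subseteq> W)}
     \<subseteq> (\<lambda>(W,D). real (card D) / real (card W)) ` (Pow V \<times> Pow E)" by auto
  then show ?thesis by (rule finite_subset) (use fV fE in simp)
qed

lemma md_half:
  assumes "is_graph V E" "E' \<subseteq> E" "E' \<noteq> {}"
  shows "max_density V E' \<ge> 1/2"
proof -
  have g: "is_graph V E'" using assms unfolding is_graph_def by auto
  obtain d where d: "d \<in> E'" using assms by auto
  then have "d \<subseteq> V" "card d = 2" using g unfolding is_graph_def by auto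
  then have "real (card {d}) / real (card d) \<in> {real (card D) / real (card W) | W D. W \<subseteq> V \<and> W \<noteq> {} \<and> D \<subseteq> E' \<and> (\<forall>d\<in>D. d \<subseteq> W)}"
    using d by (intro CollectI exI[of _ d] exI[of _ "{d}"]) auto
  then have "real (card {d}) / real (card d) \<le> max_density V E'"
    unfolding max_density_def using md_nonneg[OF g] by (intro Max_ge)
  then show ?thesis using \<open>card d = 2\<close> by simp
qed

lemma md_zero:
  assumes "is_graph V E" "V \<noteq> {}"
  shows "max_density V {} = 0"
proof -
  have "{real (card D) / real (card W) | W D. W \<subseteq> V \<and> W \<noteq> {} \<and> D \<subseteq> ({}::'a set set) \<and> (\<forall>d\<in>D. d \<subseteq> W)} = {0}"
    using assms by auto
  then show ?thesis unfolding max_density_def by simp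
qed

lemma lam_facts:
  assumes g: "is_graph V E" and ne: "E \<noteq> {}" and l: "lambda_star V E \<noteq> 0"
  shows "lambda_star V E \<ge> 1/2" "\<forall>e\<in>E. E - {e} \<noteq> {}"
proof -
  have fV: "finite V" using g unfolding is_graph_def by simp
  have "E \<subseteq> Pow V" using g unfolding is_graph_def by auto
  then have fE: "finite E" using fV finite_subset by blast
  obtain e0 where "e0 \<in> E" using ne by auto
  then have Vne: "V \<noteq> {}" using g unfolding is_graph_def by fastforce
  show ne2: "\<forall>e\<in>E. E - {e} \<noteq> {}"
  proof
    fix e assume e: "e \<in> E"
    show "E - {e} \<noteq> {}"
    proof
      assume h: "E - {e} = {}"
      have "lambda_star V E \<le> max_density V (E - {e})"
        unfolding lambda_star_def using fE e by (intro Min_le) auto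
      moreover have "\<forall>x\<in>E. 0 \<le> max_density V (E - {x})"
      proof
        fix x assume "x \<in> E"
        show "0 \<le> max_density V (E - {x})"
        proof (cases "E - {x} = {}")
          case True then show ?thesis by (simp only: True md_zero[OF g Vne])
        next
          case False then show ?thesis using md_half[OF g, of "E - {x}"] by auto
        qed
      qed
      then have "lambda_star V E \<ge> 0"
        unfolding lambda_star_def using fE ne by (subst Min_ge_iff) auto
      ultimately show False using h md_zero[OF g Vne] l by simp
    qed
  qed
  show "lambda_star V E \<ge> 1/2"
    unfolding lambda_star_def using fE ne ne2 md_half[OF g]
    by (subst Min_ge_iff) auto
qed

lemma card_Kn: "card (Kn_edges n) \<le> n * n"
proof -
  have "Kn_edges n \<subseteq> (\<lambda>(u,v). {u,v}) ` ({0..<n} \<times> {0..<n})"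
    unfolding Kn_edges_def by auto
  then have "card (Kn_edges n) \<le> card ((\<lambda>(u,v). {u,v}) ` ({0..<n} \<times> {0..<n}))"
    by (rule card_mono[rotated]) simp
  also have "\<dots> \<le> card ({0..<n} \<times> {0..<n})" by (rule card_image_le) simp
  finally show ?thesis by simp
qed

lemma Kn_closed: "bclosure n V E (Kn_edges n) = Kn_edges n"
proof -
  have "\<And>t. (bstep n V E ^^ t) (Kn_edges n) = Kn_edges n"
  proof -
    fix t show "(bstep n V E ^^ t) (Kn_edges n) = Kn_edges n"
      by (induction t) (auto simp: bstep_def)
  qed
  then show ?thesis unfolding bclosure_def by simp
qed

lemma pc_nonneg_and_lower:
  fixes q :: real
  assumes "\<And>p. 0 \<le> p \<Longrightarrow> p < q \<Longrightarrow> gnp_prob n p (\<lambda>G. bclosure n V E G = Kn_edges n) < 1/2"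
    and "q \<le> 1"
  shows "p_c n V E \<ge> q"
proof -
  let ?S = "{p. 0 \<le> p \<and> p \<le> 1 \<and> gnp_prob n p (\<lambda>G. bclosure n V E G = Kn_edges n) \<ge> 1/2}"
  have "1 \<in> ?S"
  proof -
    have fK: "finite (Kn_edges n)"
    proof -
      have "Kn_edges n \<subseteq> Pow {0..<n}" unfolding Kn_edges_def by auto
      then show ?thesis by (rule finite_subset) simp
    qed
    have "gnp_prob n 1 (\<lambda>G. bclosure n V E G = Kn_edges n) =
       (\<Sum>G\<in>Pow (Kn_edges n). if G = Kn_edges n then 1 else 0)"
      unfolding gnp_prob_def
    proof (rule sum.cong[OF refl])
      fix G assume G: "G \<in> Pow (Kn_edges n)"
      show "(if bclosure n V E G = Kn_edges n then (1::real) ^ card G * (1 - 1) ^ (card (Kn_edges n) - card G) else 0)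
          = (if G = Kn_edges n then 1 else 0)"
      proof (cases "G = Kn_edges n")
        case True then show ?thesis using Kn_closed by simp
      next
        case False
        then have "card G < card (Kn_edges n)" using G fK by (meson PowD psubsetI psubset_card_mono)
        then show ?thesis using False by auto
      qed
    qed
    also have "\<dots> = 1" using fK by simp
    finally show ?thesis by simp
  qed
  then have ne: "?S \<noteq> {}" by blast
  show ?thesis unfolding p_c_def
  proof (rule cInf_greatest[OF ne])
    fix p assume "p \<in> ?S"
    then show "q \<le> p" using assms(1)[of p] by force
  qed
qed

lemma finK: "finite (Kn_edges n)"
proof -
  have "Kn_edges n \<subseteq> Pow {0..<n}" unfolding Kn_edges_def by auto
  then show ?thesis by (rule finite_subset) simp
qed

lemma w_nonneg: "0 \<le> p \<Longrightarrow> p \<le> (1::real) \<Longrightarrow> 0 \<le> p ^ a * (1 - p) ^ b" by simp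

lemma gnp_mono:
  assumes "\<And>G. G \<subseteq> Kn_edges n \<Longrightarrow> P G \<Longrightarrow> Q G" "0 \<le> p" "p \<le> 1"
  shows "gnp_prob n p P \<le> gnp_prob n p Q"
  unfolding gnp_prob_def by (rule sum_mono) (use assms in auto)

lemma gnp_or:
  assumes "0 \<le> p" "p \<le> 1"
  shows "gnp_prob n p (\<lambda>G. P G \<or> Q G) \<le> gnp_prob n p P + gnp_prob n p Q"
  unfolding gnp_prob_def sum.distrib[symmetric] by (rule sum_mono) (use assms in auto)

lemma gnp_ex:
  assumes "finite I" "0 \<le> p" "p \<le> 1"
  shows "gnp_prob n p (\<lambda>G. \<exists>i\<in>I. Q i G) \<le> (\<Sum>i\<in>I. gnp_prob n p (Q i))"
  using assms(1)
proof (induction I rule: finite_induct)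
  case empty then show ?case by (simp add: gnp_prob_def)
next
  case (insert x I)
  have "gnp_prob n p (\<lambda>G. \<exists>i\<in>insert x I. Q i G) = gnp_prob n p (\<lambda>G. Q x G \<or> (\<exists>i\<in>I. Q i G))"
    by simp
  also have "\<dots> \<le> gnp_prob n p (Q x) + gnp_prob n p (\<lambda>G. \<exists>i\<in>I. Q i G)"
    by (rule gnp_or[OF assms(2,3)])
  also have "\<dots> \<le> gnp_prob n p (Q x) + (\<Sum>i\<in>I. gnp_prob n p (Q i))"
    using insert.IH by simp
  finally show ?case using insert by simp
qed

lemma gnp_sup:
  assumes "0 \<le> p" "p \<le> 1"
  shows "gnp_prob n p (\<lambda>G. S \<subseteq> G) \<le> p ^ card S"
proof (cases "S \<subseteq> Kn_edges n")
  case False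
  have "gnp_prob n p (\<lambda>G. S \<subseteq> G) = 0" unfolding gnp_prob_def
    by (rule sum.neutral) (use False in auto)
  then show ?thesis using assms by simp
next
  case True
  let ?K = "Kn_edges n"
  let ?t = "\<lambda>G. p ^ card G * (1 - p) ^ (card ?K - card G)"
  have fS: "finite S" using True finK finite_subset by blast
  have "gnp_prob n p (\<lambda>G. S \<subseteq> G) = (\<Sum>G\<in>{G\<in>Pow ?K. S \<subseteq> G}. ?t G)"
    unfolding gnp_prob_def by (rule sum.inter_filter[symmetric]) (simp add: finK)
  also have "{G\<in>Pow ?K. S \<subseteq> G} = (\<lambda>H. S \<union> H) ` Pow (?K - S)"
  proof
    show "{G\<in>Pow ?K. S \<subseteq> G} \<subseteq> (\<lambda>H. S \<union> H) ` Pow (?K - S)"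
    proof
      fix G assume "G \<in> {G\<in>Pow ?K. S \<subseteq> G}"
      then have "G = S \<union> (G - S)" "G - S \<in> Pow (?K - S)" by auto
      then show "G \<in> (\<lambda>H. S \<union> H) ` Pow (?K - S)" by blast
    qed
    show "(\<lambda>H. S \<union> H) ` Pow (?K - S) \<subseteq> {G\<in>Pow ?K. S \<subseteq> G}" using True by auto
  qed
  also have "(\<Sum>G\<in>(\<lambda>H. S \<union> H) ` Pow (?K - S). ?t G) = (\<Sum>H\<in>Pow (?K - S). ?t (S \<union> H))"
  proof (rule sum.reindex[unfolded o_def])
    show "inj_on (\<lambda>H. S \<union> H) (Pow (?K - S))" by (rule inj_onI) auto
  qed
  also have "\<dots> = (\<Sum>H\<in>Pow (?K - S). p ^ card S * (p ^ card H * (1 - p) ^ (card (?K - S) - card H)))"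
  proof (rule sum.cong[OF refl])
    fix H assume H: "H \<in> Pow (?K - S)"
    have fH: "finite H" using H finK finite_subset by blast
    have c1: "card (S \<union> H) = card S + card H" using H fH fS by (subst card_Un_disjoint) auto
    have cH: "card H \<le> card (?K - S)" using H finK by (intro card_mono) auto
    have c2: "card (?K - S) = card ?K - card S" using True fS by (simp add: card_Diff_subset)
    have "card ?K - card (S \<union> H) = card (?K - S) - card H" using c1 c2 by simp
    then show "?t (S \<union> H) = p ^ card S * (p ^ card H * (1 - p) ^ (card (?K - S) - card H))"
      using c1 by (simp add: power_add)
  qed
  also have "\<dots> = p ^ card S" using total_one[of "?K - S" p] finK
    by (simp add: sum_distrib_left[symmetric])
  finally show ?thesis by simp
qed

lemma term_bound:
  fixes n w d :: nat and l c p :: real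
  assumes n: "n \<ge> 1" and w: "w \<ge> 1" and l: "l > 0" and d: "real d \<ge> l * real w"
    and p: "0 \<le> p" "p \<le> c * real n powr (- 1 / l)" and c: "0 < c" "c powr l \<le> 1"
  shows "real n ^ w * p ^ d \<le> c powr l"
proof -
  have c1: "c \<le> 1"
  proof (rule ccontr)
    assume "\<not> c \<le> 1"
    then have "1 < c powr l" using l powr_less_mono2[of l 1 c] by simp
    then show False using c by simp
  qed
  have np: "real n powr (- 1 / l) \<le> 1"
  proof -
    have "real n powr (- 1 / l) \<le> real n powr 0"
      by (rule powr_mono) (use n l in auto)
    then show ?thesis using n by simp
  qed
  have pn: "real n powr (- 1 / l) \<ge> 0" by simp
  have "c * real n powr (- 1 / l) \<le> 1 * 1" by (rule mult_mono[OF c1 np]) (use c in auto)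
  then have p1: "p \<le> 1" using p(2) by simp
  have cl0: "c powr l \<ge> 0" by simp
  show ?thesis
  proof (cases "p = 0")
    case True
    have "real d > 0" proof -
      have "l * real w > 0" using l w by simp
      then show ?thesis using d by linarith
    qed
    then have "d \<ge> 1" by simp
    then show ?thesis using True cl0 by (simp add: power_0_left)
  next
    case False
    then have pp: "p > 0" using p by simp
    have "p ^ d = p powr real d" using pp by (simp add: powr_realpow)
    also have "\<dots> \<le> p powr (l * real w)" by (rule powr_mono'[OF d]) (use pp p1 in auto)
    also have "\<dots> = (p powr l) powr real w" by (simp only: powr_powr)
    also have "\<dots> = (p powr l) ^ w" using pp by (intro powr_realpow) simp
    finally have h1: "p ^ d \<le> (p powr l) ^ w" .
    have "real n * p powr l \<le> real n * (c * real n powr (- 1 / l)) powr l"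
      using p l n by (intro mult_left_mono powr_mono2) auto
    also have "\<dots> = c powr l"
    proof -
      have "(c * real n powr (- 1 / l)) powr l = c powr l * real n powr (- 1)"
      proof -
        have "(c * real n powr (- 1 / l)) powr l = c powr l * (real n powr (- 1 / l)) powr l"
          by (rule powr_mult)
        also have "(real n powr (- 1 / l)) powr l = real n powr (- 1 / l * l)" by (simp only: powr_powr)
        also have "- 1 / l * l = -1" using l by simp
        finally show ?thesis .
      qed
      then show ?thesis using n by (simp add: powr_minus)
    qed
    finally have h2: "real n * p powr l \<le> c powr l" .
    have "real n ^ w * p ^ d \<le> real n ^ w * (p powr l) ^ w"
      using h1 by (intro mult_left_mono) auto
    also have "\<dots> = (real n * p powr l) ^ w" by (simp add: power_mult_distrib)
    also have "\<dots> \<le> (c powr l) ^ w" using h2 by (intro power_mono) auto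
    also have "\<dots> \<le> c powr l" using power_decreasing[OF w cl0 c(2)] by simp
    finally show ?thesis .
  qed
qed

lemma no_copy_closure:
  assumes g: "is_graph V E" and G: "G \<subseteq> Kn_edges n" and cl: "bclosure n V E G = Kn_edges n"
    and WD: "\<forall>e0\<in>E. W e0 \<subseteq> V \<and> D e0 \<subseteq> E - {e0} \<and> (\<forall>d\<in>D e0. d \<subseteq> W e0)"
  shows "(\<exists>e0\<in>E. \<exists>f\<in>{f \<in> PiE (W e0) (\<lambda>_. {0..<n}). inj_on f (W e0)}. (\<lambda>d. f ` d) ` D e0 \<subseteq> G)
         \<or> Kn_edges n \<subseteq> G"
proof (rule ccontr)
  assume na: "\<not> ?thesis"
  have step: "bstep n V E G = G"
  proof -
    have inG: "e \<in> G" if e: "e \<in> Kn_edges n" "inj_on g V" "g ` V \<subseteq> {0..<n}"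
      "e \<in> (\<lambda>d. g ` d) ` E" "(\<lambda>d. g ` d) ` E \<subseteq> G \<union> {e}" for e g
    proof (rule ccontr)
      assume eG: "e \<notin> G"
      obtain e0 where e0: "e0 \<in> E" "e = g ` e0" using e(4) by auto
      have W: "W e0 \<subseteq> V" "D e0 \<subseteq> E - {e0}" "\<forall>d\<in>D e0. d \<subseteq> W e0" using WD e0 by auto
      define f where "f = restrict g (W e0)"
      have fP: "f \<in> PiE (W e0) (\<lambda>_. {0..<n})" using W(1) e(3) unfolding f_def by auto
      have fi: "inj_on f (W e0)" using inj_on_subset[OF e(2) W(1)] unfolding f_def
        by (simp add: inj_on_def)
      have "(\<lambda>d. f ` d) ` D e0 \<subseteq> G"
      proof
        fix x assume "x \<in> (\<lambda>d. f ` d) ` D e0"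
        then obtain d where d: "d \<in> D e0" "x = f ` d" by auto
        have dW: "d \<subseteq> W e0" using W d by auto
        have "f ` d = g ` d" unfolding f_def using dW by (intro image_cong) auto
        moreover have dE: "d \<in> E" "d \<noteq> e0" using W(2) d by auto
        moreover have "g ` d \<in> G \<union> {e}" using e(5) dE by auto
        moreover have "g ` d \<noteq> g ` e0"
        proof
          assume "g ` d = g ` e0"
          moreover have "d \<subseteq> V" "e0 \<subseteq> V" using g dE e0 unfolding is_graph_def by auto
          ultimately have "d = e0" using e(2) inj_on_image_eq_iff by metis
          then show False using dE by simp
        qed
        ultimately show "x \<in> G" using d e0 by auto
      qed
      then show False using na e0 fP fi by blast
    qed
    have "x \<in> G" if x: "x \<in> bstep n V E G" for x
    proof -
      have "x \<in> G \<or> (x \<in> Kn_edges n \<and> (\<exists>g. inj_on g V \<and> g ` V \<subseteq> {0..<n} \<and>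
        x \<in> (\<lambda>d. g ` d) ` E \<and> (\<lambda>d. g ` d) ` E \<subseteq> G \<union> {x}))"
        using x unfolding bstep_def by simp
      then show ?thesis
      proof
        assume "x \<in> Kn_edges n \<and> (\<exists>g. inj_on g V \<and> g ` V \<subseteq> {0..<n} \<and>
          x \<in> (\<lambda>d. g ` d) ` E \<and> (\<lambda>d. g ` d) ` E \<subseteq> G \<union> {x})"
        then obtain g where gg: "x \<in> Kn_edges n" "inj_on g V" "g ` V \<subseteq> {0..<n}"
          "x \<in> (\<lambda>d. g ` d) ` E" "(\<lambda>d. g ` d) ` E \<subseteq> G \<union> {x}" by blast
        show ?thesis by (rule inG[OF gg])
      qed
    qed
    moreover have "G \<subseteq> bstep n V E G" unfolding bstep_def by simp
    ultimately show ?thesis by blast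
  qed
  have "\<And>t. (bstep n V E ^^ t) G = G"
  proof -
    fix t show "(bstep n V E ^^ t) G = G" by (induction t) (use step in auto)
  qed
  then have "bclosure n V E G = G" unfolding bclosure_def by simp
  then show False using na cl by simp
qed

theorem proposition5p2:
  fixes V :: "'a set" and E :: "'a set set"
  assumes "is_graph V E" and "E \<noteq> {}"
  shows "\<exists>c>0. \<forall>n::nat. n \<ge> 2 \<longrightarrow>
           p_c n V E \<ge> c * (if lambda_star V E = 0 then 0
                              else real n powr (- 1 / lambda_star V E))"
proof -
  let ?l = "lambda_star V E"
  have g: "is_graph V E" by fact
  have fV: "finite V" using g unfolding is_graph_def by simp
  have "E \<subseteq> Pow V" using g unfolding is_graph_def by auto
  then have fE: "finite E" using fV finite_subset by blast
  obtain e1 where "e1 \<in> E" using assms(2) by auto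
  then have Vne: "V \<noteq> {}" using g unfolding is_graph_def by fastforce
  show ?thesis
  proof (cases "?l = 0")
    case True
    show ?thesis
    proof (intro exI[of _ 1] conjI allI impI)
      fix n :: nat
      have "p_c n V E \<ge> 0" by (rule pc_nonneg_and_lower) auto
      then show "p_c n V E \<ge> 1 * (if ?l = 0 then 0 else real n powr (- 1 / ?l))" using True by simp
    qed simp
  next
    case False
    note lf = lam_facts[OF assms False]
    have lp: "?l > 0" using lf(1) by simp
    have "\<forall>e0\<in>E. \<exists>WD. fst WD \<subseteq> V \<and> fst WD \<noteq> {} \<and> snd WD \<subseteq> E - {e0} \<and> (\<forall>d\<in>snd WD. d \<subseteq> fst WD)
        \<and> real (card (snd WD)) / real (card (fst WD)) = max_density V (E - {e0})"
    proof
      fix e0 assume e0: "e0 \<in> E"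
      have g': "is_graph V (E - {e0})" using g unfolding is_graph_def by auto
      let ?M = "{real (card D) / real (card W) | W D. W \<subseteq> V \<and> W \<noteq> {} \<and> D \<subseteq> E - {e0} \<and> (\<forall>d\<in>D. d \<subseteq> W)}"
      have "real (card ({}::'a set set)) / real (card V) \<in> ?M" using Vne by blast
      then have "?M \<noteq> {}" by blast
      then have "max_density V (E - {e0}) \<in> ?M" unfolding max_density_def
        using md_nonneg[OF g'] by (intro Max_in) auto
      then obtain W D where "W \<subseteq> V \<and> W \<noteq> {} \<and> D \<subseteq> E - {e0} \<and> (\<forall>d\<in>D. d \<subseteq> W)"
        "max_density V (E - {e0}) = real (card D) / real (card W)"
        unfolding mem_Collect_eq by blast
      then show "\<exists>WD. fst WD \<subseteq> V \<and> fst WD \<noteq> {} \<and> snd WD \<subseteq> E - {e0} \<and> (\<forall>d\<in>snd WD. d \<subseteq> fst WD)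
        \<and> real (card (snd WD)) / real (card (fst WD)) = max_density V (E - {e0})"
        by (intro exI[of _ "(W, D)"]) simp
    qed
    then obtain WD where WD: "\<forall>e0\<in>E. fst (WD e0) \<subseteq> V \<and> fst (WD e0) \<noteq> {} \<and> snd (WD e0) \<subseteq> E - {e0}
        \<and> (\<forall>d\<in>snd (WD e0). d \<subseteq> fst (WD e0))
        \<and> real (card (snd (WD e0))) / real (card (fst (WD e0))) = max_density V (E - {e0})"
      by (rule bchoice[THEN exE]) blast
    define Wf where "Wf e0 = fst (WD e0)" for e0
    define Df where "Df e0 = snd (WD e0)" for e0
    have WD': "\<forall>e0\<in>E. Wf e0 \<subseteq> V \<and> Df e0 \<subseteq> E - {e0} \<and> (\<forall>d\<in>Df e0. d \<subseteq> Wf e0)"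
      using WD unfolding Wf_def Df_def by auto
    have dens: "real (card (Df e0)) \<ge> ?l * real (card (Wf e0))" "card (Wf e0) \<ge> 1"
      if e0: "e0 \<in> E" for e0
    proof -
      have W: "Wf e0 \<subseteq> V" "Wf e0 \<noteq> {}" using WD e0 unfolding Wf_def by auto
      then have "finite (Wf e0)" using fV finite_subset by blast
      then show cw: "card (Wf e0) \<ge> 1" using W(2) by (simp add: Suc_le_eq card_gt_0_iff)
      have "?l \<le> max_density V (E - {e0})"
        unfolding lambda_star_def using fE e0 by (intro Min_le) auto
      also have "\<dots> = real (card (Df e0)) / real (card (Wf e0))"
        using WD e0 unfolding Wf_def Df_def by auto
      finally show "real (card (Df e0)) \<ge> ?l * real (card (Wf e0))"
        using cw by (simp add: le_divide_eq)
    qed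
    define X :: real where "X = 1 / (4 * real (card E))"
    have cE: "card E \<ge> 1" using fE assms(2) by (simp add: Suc_le_eq card_gt_0_iff)
    have Xp: "0 < X" "X \<le> 1/4" using cE by (auto simp: X_def)
    define c where "c = min (1/4) (X powr (1 / ?l))"
    have cp: "0 < c" "c \<le> 1/4" using Xp by (auto simp: c_def)
    have cl: "c powr ?l \<le> X"
    proof -
      have "c powr ?l \<le> (X powr (1 / ?l)) powr ?l"
        using cp lp by (intro powr_mono2) (auto simp: c_def)
      also have "\<dots> = X" using lp Xp by (simp add: powr_powr)
      finally show ?thesis .
    qed
    show ?thesis
    proof (intro exI[of _ c] conjI allI impI)
      show "0 < c" by fact
      fix n :: nat assume n: "n \<ge> 2"
      define q where "q = c * real n powr (- 1 / ?l)"
      have np: "real n powr (- 1 / ?l) \<le> 1"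
      proof -
        have "real n powr (- 1 / ?l) \<le> real n powr 0"
          by (rule powr_mono) (use n lp in auto)
        then show ?thesis using n by simp
      qed
      have "c * real n powr (- 1 / ?l) \<le> 1 * 1" by (rule mult_mono) (use cp np in auto)
      then have q1: "q \<le> 1" unfolding q_def by simp
      have qc: "q \<le> c" using mult_left_mono[OF np, of c] cp unfolding q_def by simp
      have "p_c n V E \<ge> q"
      proof (rule pc_nonneg_and_lower[OF _ q1])
        fix p :: real assume p: "0 \<le> p" "p < q"
        have p1: "p \<le> 1" using p q1 by simp
        let ?K = "Kn_edges n"
        define Idx where "Idx e0 = {f \<in> PiE (Wf e0) (\<lambda>_. {0..<n}). inj_on f (Wf e0)}" for e0
        define Q where "Q e0 G = (\<exists>f\<in>Idx e0. (\<lambda>d. f ` d) ` Df e0 \<subseteq> G)" for e0 G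
        have "gnp_prob n p (\<lambda>G. bclosure n V E G = ?K) \<le> gnp_prob n p (\<lambda>G. (\<exists>e0\<in>E. Q e0 G) \<or> ?K \<subseteq> G)"
          by (rule gnp_mono[OF _ p(1) p1]) (use no_copy_closure[OF g _ _ WD'] in \<open>auto simp: Q_def Idx_def\<close>)
        also have "\<dots> \<le> gnp_prob n p (\<lambda>G. \<exists>e0\<in>E. Q e0 G) + gnp_prob n p (\<lambda>G. ?K \<subseteq> G)"
          by (rule gnp_or[OF p(1) p1])
        also have "\<dots> \<le> (\<Sum>e0\<in>E. gnp_prob n p (Q e0)) + p ^ card ?K"
          using gnp_ex[OF fE p(1) p1, of n Q] gnp_sup[OF p(1) p1, of n ?K] by simp
        also have "\<dots> \<le> (\<Sum>e0\<in>E. X) + p"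
        proof (rule add_mono)
          show "p ^ card ?K \<le> p"
          proof -
            have "{0,1} \<in> ?K" using n unfolding Kn_edges_def by force
            then have "card ?K \<ge> 1" using finK by (metis One_nat_def Suc_le_eq card_gt_0_iff empty_iff)
            then show ?thesis using power_decreasing[of 1 "card ?K" p] p p1 by simp
          qed
          show "(\<Sum>e0\<in>E. gnp_prob n p (Q e0)) \<le> (\<Sum>e0\<in>E. X)"
          proof (rule sum_mono)
            fix e0 assume e0: "e0 \<in> E"
            have W: "Wf e0 \<subseteq> V" "Df e0 \<subseteq> E - {e0}" "\<forall>d\<in>Df e0. d \<subseteq> Wf e0" using WD' e0 by auto
            have fW: "finite (Wf e0)" using W fV finite_subset by blast
            have fPi: "finite (PiE (Wf e0) (\<lambda>_. {0..<n}))" using fW by (intro finite_PiE) auto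
            have fI: "finite (Idx e0)" unfolding Idx_def by (rule finite_subset[OF _ fPi]) auto
            have cI: "card (Idx e0) \<le> n ^ card (Wf e0)"
            proof -
              have "card (Idx e0) \<le> card (PiE (Wf e0) (\<lambda>_. {0..<n}))"
                unfolding Idx_def by (rule card_mono[OF fPi]) auto
              also have "\<dots> = n ^ card (Wf e0)" using fW by (simp add: card_PiE)
              finally show ?thesis .
            qed
            have "gnp_prob n p (Q e0) = gnp_prob n p (\<lambda>G. \<exists>f\<in>Idx e0. (\<lambda>d. f ` d) ` Df e0 \<subseteq> G)"
              unfolding Q_def ..
            also have "\<dots> \<le> (\<Sum>f\<in>Idx e0. gnp_prob n p (\<lambda>G. (\<lambda>d. f ` d) ` Df e0 \<subseteq> G))"
              by (rule gnp_ex[OF fI p(1) p1])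
            also have "\<dots> \<le> (\<Sum>f\<in>Idx e0. p ^ card (Df e0))"
            proof (rule sum_mono)
              fix f assume f: "f \<in> Idx e0"
              then have fi: "inj_on f (Wf e0)" unfolding Idx_def by auto
              have "inj_on (\<lambda>d. f ` d) (Df e0)"
              proof (rule inj_onI)
                fix d1 d2 assume "d1 \<in> Df e0" "d2 \<in> Df e0" "f ` d1 = f ` d2"
                then show "d1 = d2" using W(3) fi inj_on_image_eq_iff by metis
              qed
              then have "card ((\<lambda>d. f ` d) ` Df e0) = card (Df e0)" by (rule card_image)
              then show "gnp_prob n p (\<lambda>G. (\<lambda>d. f ` d) ` Df e0 \<subseteq> G) \<le> p ^ card (Df e0)"
                using gnp_sup[OF p(1) p1, of n "(\<lambda>d. f ` d) ` Df e0"] by simp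
            qed
            also have "\<dots> = real (card (Idx e0)) * p ^ card (Df e0)" by simp
            also have "\<dots> \<le> real n ^ card (Wf e0) * p ^ card (Df e0)"
            proof (rule mult_right_mono)
              show "real (card (Idx e0)) \<le> real n ^ card (Wf e0)" using cI
                by (metis of_nat_le_iff of_nat_power)
            qed (use p in simp)
            also have "\<dots> \<le> c powr ?l"
            proof (rule term_bound)
              show "1 \<le> n" using n by simp
              show "1 \<le> card (Wf e0)" using dens(2)[OF e0] .
              show "0 < ?l" by fact
              show "?l * real (card (Wf e0)) \<le> real (card (Df e0))" using dens(1)[OF e0] .
              show "0 \<le> p" by fact
              show "p \<le> c * real n powr (- 1 / ?l)" using p unfolding q_def by simp
              show "0 < c" by fact
              show "c powr ?l \<le> 1" using cl Xp by simp
            qed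
            also have "\<dots> \<le> X" by fact
            finally show "gnp_prob n p (Q e0) \<le> X" .
          qed
        qed
        also have "\<dots> = 1/4 + p" using cE by (simp add: X_def)
        also have "\<dots> < 1/2" using p qc cp by simp
        finally show "gnp_prob n p (\<lambda>G. bclosure n V E G = ?K) < 1/2" .
      qed
      then show "c * (if ?l = 0 then 0 else real n powr (- 1 / ?l)) \<le> p_c n V E"
        using False unfolding q_def by simp
    qed
  qed
qed

end
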